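(* Let $d\ge1$, $N=2^d$, $Q\ge1$, $P$ a cube in $\mathbb{R}^d$, $P_1,\dots,P_N$ its first-generation dyadic subcubes, and $\phi:P\to P_1$ the affine map $\phi(z)=c+\frac12 z$ (suitable $c$) mapping $P$ onto $P_1$. For a weight $w$ on $P$ define the weight $Tw$ on $P$ by $Tw(z)=\frac{NQ-(N-1)}{Q}\,w(\phi^{-1}(z))$ for $z\in P_1$ and $Tw(z)=1$ for $z\in P\setminus P_1$; for $E\subseteq P$ let $S(E)=\phi(E)$. Let $w_0$ be any weight on $P$ with $\langle w_0\rangle_P=Q$, $\operatorname{ess\,inf}_{z\in P}w_0(z)=1$ and $[w_0]_{A_1^d(P)}=Q$, let $E_0=P$, and define $w_{k+1}=Tw_k$, $E_{k+1}=S(E_k)$. Then for every $k\ge0$, $[w_k]_{A_1^d(P)}=Q$, $\langle w_k\rangle_P=Q$, $\operatorname{ess\,inf}_{z\in P}w_k(z)=1$, $\langle\mathbf{1}_{E_k}\rangle_P=N^{-k}$, and \[ \frac{w_k(E_k)}{|P|}=Q\Bigl(1-\frac{N-1}{NQ}\Bigr)^k. \]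
   Context: A weight on $P$ is a nonnegative locally integrable function; $w(E)=\int_Ew$, $\langle g\rangle_R=\frac1{|R|}\int_Rg$. $\mathcal{D}(P)$ is the collection of dyadic subcubes of $P$; $M^d_Pg(z)=\sup_{R\in\mathcal{D}(P),\,z\in R}\langle|g|\rangle_R$ and $[w]_{A_1^d(P)}=\operatorname{ess\,sup}_{z\in P}M^d_Pw(z)/w(z)$. An example of admissible $w_0$: $w_0=1$ on $P_1,\dots,P_{N-1}$ and $w_0=1+N(Q-1)$ on $P_N$. *)

theory Defs
  imports "HOL-Analysis.Analysis"
begin

definition cube :: "real^'n \<Rightarrow> real \<Rightarrow> (real^'n) set" where
  "cube a l = {x. \<forall>i. a$i \<le> x$i \<and> x$i < a$i + l}"

definition dyadic_gen :: "real^'n \<Rightarrow> real \<Rightarrow> nat \<Rightarrow> (real^'n) set set" where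
  "dyadic_gen a l k = {cube (a + (l / 2^k) *\<^sub>R (\<chi> i. real (j i))) (l / 2^k) | j. \<forall>i. j i < (2::nat)^k}"

definition dyadic_subcubes :: "real^'n \<Rightarrow> real \<Rightarrow> (real^'n) set set" where
  "dyadic_subcubes a l = (\<Union>k. dyadic_gen a l k)"

definition wmeas :: "(real^'n \<Rightarrow> real) \<Rightarrow> (real^'n) set \<Rightarrow> real" where
  "wmeas w E = (LINT x:E|lebesgue. w x)"

definition avg :: "(real^'n \<Rightarrow> real) \<Rightarrow> (real^'n) set \<Rightarrow> real" where
  "avg g R = wmeas g R / measure lebesgue R"

definition dyadic_max :: "real^'n \<Rightarrow> real \<Rightarrow> (real^'n \<Rightarrow> real) \<Rightarrow> real^'n \<Rightarrow> ereal" where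
  "dyadic_max a l g z = (SUP R \<in> {R \<in> dyadic_subcubes a l. z \<in> R}. ereal (avg (\<lambda>x. \<bar>g x\<bar>) R))"

definition ess_sup_on :: "(real^'n) set \<Rightarrow> (real^'n \<Rightarrow> ereal) \<Rightarrow> ereal" where
  "ess_sup_on S f = Inf {c. AE x in lebesgue_on S. f x \<le> c}"

definition ess_inf_on :: "(real^'n) set \<Rightarrow> (real^'n \<Rightarrow> ereal) \<Rightarrow> ereal" where
  "ess_inf_on S f = Sup {c. AE x in lebesgue_on S. c \<le> f x}"

definition A1_const :: "real^'n \<Rightarrow> real \<Rightarrow> (real^'n \<Rightarrow> real) \<Rightarrow> ereal" where
  "A1_const a l w = ess_sup_on (cube a l) (\<lambda>z. dyadic_max a l w z / ereal (w z))"

text \<open>The operator T (with phi(z) = c + z/2, so phi^{-1}(z) = 2(z - c)).\<close>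
definition Top :: "real \<Rightarrow> real \<Rightarrow> real^'n \<Rightarrow> (real^'n) set \<Rightarrow> (real^'n \<Rightarrow> real) \<Rightarrow> real^'n \<Rightarrow> real" where
  "Top N Q c P1 w z = (if z \<in> P1 then (N * Q - (N - 1)) / Q * w (2 *\<^sub>R (z - c)) else 1)"

end

theory Submission imports Defs begin


lemma affine_half_T: "(\<lambda>x::'a::euclidean_space. t + (\<Sum>j\<in>Basis. (c * (x \<bullet> j)) *\<^sub>R j)) = (\<lambda>x. t + c *\<^sub>R x)"
  unfolding scaleR_scaleR[symmetric] scaleR_sum_right[symmetric]
  by (auto simp add: euclidean_representation)

lemma leb_aff:
  assumes "c \<noteq> 0"
  shows "lebesgue = density (distr lebesgue lebesgue (\<lambda>x::'a::euclidean_space. t + c *\<^sub>R x)) (\<lambda>_. ennreal (\<bar>c\<bar>^DIM('a)))"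
  using lebesgue_affine_euclidean[of "\<lambda>_. c" t] assms unfolding affine_half_T by simp

lemma aff_meas[measurable]:
  "(\<lambda>x::'a::euclidean_space. t + c *\<^sub>R x) \<in> lebesgue \<rightarrow>\<^sub>M lebesgue"
proof (cases "c = 0")
  case True then show ?thesis by simp
next
  case False
  then show ?thesis using lebesgue_affine_measurable[of "\<lambda>_. c" t] unfolding affine_half_T by simp
qed

lemma cv:
  fixes g :: "'a::euclidean_space \<Rightarrow> real"
  assumes c: "c \<noteq> 0" and S: "S \<in> sets lebesgue"
    and int: "set_integrable lebesgue S (\<lambda>x. g (t + c *\<^sub>R x))"
  shows "set_integrable lebesgue ((\<lambda>x. t + c *\<^sub>R x) ` S) g \<and>
    (LINT z:(\<lambda>x. t + c *\<^sub>R x) ` S|lebesgue. g z) = \<bar>c\<bar>^DIM('a) * (LINT x:S|lebesgue. g (t + c *\<^sub>R x))"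
proof -
  define T where "T = (\<lambda>x::'a. t + c *\<^sub>R x)"
  define T' where "T' = (\<lambda>z::'a. (-(1/c) *\<^sub>R t) + (1/c) *\<^sub>R z)"
  define K where "K = \<bar>c\<bar>^DIM('a)"
  have TT': "T' (T x) = x" for x using c by (simp add: T_def T'_def algebra_simps)
  have Tm[measurable]: "T \<in> lebesgue \<rightarrow>\<^sub>M lebesgue" unfolding T_def by (rule aff_meas)
  have T'm[measurable]: "T' \<in> lebesgue \<rightarrow>\<^sub>M lebesgue" unfolding T'_def by (rule aff_meas)
  have L: "lebesgue = density (distr lebesgue lebesgue T) (\<lambda>_. ennreal K)"
    unfolding T_def K_def by (rule leb_aff[OF c])
  define h where "h = (\<lambda>z. indicator (T`S) z *\<^sub>R g z)"
  have injT: "inj T" by (metis TT' injI)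
  have hT: "h (T x) = indicator S x *\<^sub>R g (T x)" for x
    unfolding h_def indicator_def using injT by (auto simp: inj_image_mem_iff)
  have i0: "integrable lebesgue (\<lambda>x. h (T x))"
    using int unfolding set_integrable_def hT by (simp add: T_def)
  have mh0: "(\<lambda>x. h (T x)) \<in> borel_measurable lebesgue"
    using i0 by (rule borel_measurable_integrable)
  have "(\<lambda>z. h (T (T' z))) \<in> borel_measurable lebesgue"
    using measurable_compose[OF T'm mh0] by (simp add: o_def)
  moreover have "T (T' z) = z" for z using c by (simp add: T_def T'_def algebra_simps)
  ultimately have mh[measurable]: "h \<in> borel_measurable lebesgue" by simp
  have K0: "K \<ge> 0" unfolding K_def by simp
  have "integrable lebesgue h = integrable (density (distr lebesgue lebesgue T) (\<lambda>_. ennreal K)) h"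
    by (subst L[symmetric]) (rule refl)
  also have "\<dots> = integrable (distr lebesgue lebesgue T) (\<lambda>x. K *\<^sub>R h x)"
    by (rule integrable_density) (auto simp: K0)
  also have "\<dots> = integrable lebesgue (\<lambda>x. K *\<^sub>R h (T x))"
    by (rule integrable_distr_eq) auto
  finally have ih: "integrable lebesgue h"
    using i0 by (auto intro: integrable_scaleR_right)
  have "integral\<^sup>L lebesgue h = integral\<^sup>L (density (distr lebesgue lebesgue T) (\<lambda>_. ennreal K)) h"
    by (subst L[symmetric]) (rule refl)
  also have "\<dots> = integral\<^sup>L (distr lebesgue lebesgue T) (\<lambda>x. K *\<^sub>R h x)"
    by (rule integral_density) (auto simp: K0)
  also have "\<dots> = integral\<^sup>L lebesgue (\<lambda>x. K *\<^sub>R h (T x))"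
    by (rule integral_distr) auto
  also have "\<dots> = K * integral\<^sup>L lebesgue (\<lambda>x. h (T x))" by simp
  finally have eq: "integral\<^sup>L lebesgue h = K * integral\<^sup>L lebesgue (\<lambda>x. h (T x))" .
  also have "integral\<^sup>L lebesgue (\<lambda>x. h (T x)) = integral\<^sup>L lebesgue (\<lambda>x. indicator S x *\<^sub>R g (T x))"
    by (simp only: hT)
  finally show ?thesis
    using ih unfolding set_integrable_def set_lebesgue_integral_def
    by (simp add: T_def K_def h_def)
qed

lemma cube_mem: "x \<in> cube b s \<longleftrightarrow> (\<forall>i. b$i \<le> x$i \<and> x$i < b$i + s)"
  by (simp add: cube_def)

lemma cube_eq_Int: "cube b s = (\<Inter>i. {x. b$i \<le> x$i}) \<inter> (\<Inter>i. {x. x$i < b$i + s})"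
  by (auto simp: cube_def)

lemma cube_borel: "cube b s \<in> sets borel"
proof -
  have "{x. b$i \<le> x$i} \<in> sets borel" for i
    by (rule borel_closed) (simp add: closed_Collect_le continuous_on_component)
  moreover have "{x. x$i < b$i + s} \<in> sets borel" for i
    by (rule borel_open) (simp add: open_Collect_less continuous_on_component)
  ultimately show ?thesis unfolding cube_eq_Int
    by (intro sets.Int sets.countable_INT') auto
qed

lemma cube_leb: "cube b s \<in> sets lebesgue"
proof -
  have "cube b s \<in> sets lborel" using cube_borel by simp
  then show ?thesis by (rule sets_completionI_sets)
qed

lemma cube_bounded: "bounded (cube b s)"
proof -
  have "cube b s \<subseteq> cbox b (b + (\<chi> i. s))"
    by (auto simp: cube_def mem_box_cart less_imp_le)
  then show ?thesis by (rule bounded_subset[OF bounded_cbox])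
qed

lemma cube_lmeas: "cube b s \<in> lmeasurable"
  by (rule bounded_set_imp_lmeasurable[OF cube_bounded cube_leb])

lemma cube_pos: assumes "s > 0" shows "measure lebesgue (cube b s) > 0"
proof -
  define m where "m = b + (\<chi> i. s/2)"
  have "ball m (s/2) \<subseteq> cube b s"
  proof
    fix x assume "x \<in> ball m (s/2)"
    then have "norm (x - m) < s/2" by (simp add: dist_norm norm_minus_commute)
    then have A: "\<bar>(x - m)$i\<bar> < s/2" for i using component_le_norm_cart[of "x-m" i] by linarith
    have "b$i < x$i \<and> x$i < b$i + s" for i 
    proof -
      have "(x - m)$i = x$i - b$i - s/2" by (simp add: m_def)
      then show ?thesis using A[of i] by (simp only: abs_less_iff) linarith
    qed
    then show "x \<in> cube b s" by (simp add: cube_def less_imp_le)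
  qed
  then have "measure lebesgue (ball m (s/2)) \<le> measure lebesgue (cube b s)"
    by (intro measure_mono_fmeasurable) (auto simp: cube_lmeas)
  moreover have "measure lebesgue (ball m (s/2)) > 0"
    using content_ball_pos[of "s/2" m] assms by simp
  ultimately show ?thesis by linarith
qed

lemma cube_image:
  assumes "r > 0"
  shows "(\<lambda>x. t + r *\<^sub>R x) ` cube b s = cube (t + r *\<^sub>R b) (r * s)"
proof
  show "(\<lambda>x. t + r *\<^sub>R x) ` cube b s \<subseteq> cube (t + r *\<^sub>R b) (r * s)"
  proof
    fix z assume "z \<in> (\<lambda>x. t + r *\<^sub>R x) ` cube b s"
    then obtain x where x: "x \<in> cube b s" "z = t + r *\<^sub>R x" by auto
    { fix i have "b$i \<le> x$i" "x$i < b$i + s" using x by (auto simp: cube_def)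
      then have "r * b$i \<le> r * x$i" "r * x$i < r * (b$i + s)" using assms by auto
      then have "t$i + r * b$i \<le> z$i \<and> z$i < t$i + r * b$i + r * s" using x by (simp add: distrib_left) }
    then show "z \<in> cube (t + r *\<^sub>R b) (r * s)" by (simp add: cube_def)
  qed
  show "cube (t + r *\<^sub>R b) (r * s) \<subseteq> (\<lambda>x. t + r *\<^sub>R x) ` cube b s"
  proof
    fix z assume z: "z \<in> cube (t + r *\<^sub>R b) (r * s)"
    define x where "x = (1/r) *\<^sub>R (z - t)"
    have "z = t + r *\<^sub>R x" using assms by (simp add: x_def)
    moreover have "x \<in> cube b s"
    proof -
      { fix i
        have "t$i + r * b$i \<le> z$i" "z$i < t$i + r * b$i + r * s" using z by (auto simp: cube_def)
        then have "b$i \<le> x$i \<and> x$i < b$i + s" using assms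
          by (auto simp: x_def field_simps) }
      then show ?thesis by (simp add: cube_def)
    qed
    ultimately show "z \<in> (\<lambda>x. t + r *\<^sub>R x) ` cube b s" by blast
  qed
qed

lemma cube_corner:
  assumes "s > 0" "cube p s = cube q s" shows "p = q"
proof -
  have "p \<in> cube q s" "q \<in> cube p s" using assms by (auto simp: cube_def)
  then show ?thesis by (auto simp: cube_def vec_eq_iff intro: order.antisym)
qed



lemma AE_ge_of_Sup:
  fixes f :: "'a \<Rightarrow> ereal"
  assumes "Sup {c. AE x in M. c \<le> f x} = ereal v"
  shows "AE x in M. ereal v \<le> f x"
proof -
  have "\<exists>c. (AE x in M. c \<le> f x) \<and> ereal (v - inverse (real (Suc n))) < c" for n
  proof -
    have "ereal (v - inverse (real (Suc n))) < Sup {c. AE x in M. c \<le> f x}"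
      using assms by simp
    then show ?thesis by (simp add: less_Sup_iff)
  qed
  then obtain C where C: "\<And>n. (AE x in M. C n \<le> f x) \<and> ereal (v - inverse (real (Suc n))) < C n"
    by metis
  then have "AE x in M. \<forall>n. C n \<le> f x" by (simp add: AE_all_countable)
  then show ?thesis
  proof (rule eventually_mono)
    fix x assume H: "\<forall>n. C n \<le> f x"
    have lim: "(\<lambda>n. ereal (v - inverse (real (Suc n)))) \<longlonglongrightarrow> ereal v"
    proof -
      have "(\<lambda>n. v - inverse (real (Suc n))) \<longlonglongrightarrow> v - 0"
        by (intro tendsto_diff tendsto_const LIMSEQ_inverse_real_of_nat)
      then show ?thesis by (intro tendsto_ereal) simp
    qed
    show "ereal v \<le> f x"
      by (rule LIMSEQ_le_const2[OF lim]) (metis C H less_imp_le order.trans)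
  qed
qed

lemma AE_le_of_Inf:
  fixes f :: "'a \<Rightarrow> ereal"
  assumes "Inf {c. AE x in M. f x \<le> c} = ereal v"
  shows "AE x in M. f x \<le> ereal v"
proof -
  have "\<exists>c. (AE x in M. f x \<le> c) \<and> c < ereal (v + inverse (real (Suc n)))" for n
  proof -
    have "Inf {c. AE x in M. f x \<le> c} < ereal (v + inverse (real (Suc n)))"
      using assms by simp
    then show ?thesis by (simp add: Inf_less_iff)
  qed
  then obtain C where C: "\<And>n. (AE x in M. f x \<le> C n) \<and> C n < ereal (v + inverse (real (Suc n)))"
    by metis
  then have "AE x in M. \<forall>n. f x \<le> C n" by (simp add: AE_all_countable)
  then show ?thesis
  proof (rule eventually_mono)
    fix x assume H: "\<forall>n. f x \<le> C n"
    have lim: "(\<lambda>n. ereal (v + inverse (real (Suc n)))) \<longlonglongrightarrow> ereal v"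
    proof -
      have "(\<lambda>n. v + inverse (real (Suc n))) \<longlonglongrightarrow> v + 0"
        by (intro tendsto_add tendsto_const LIMSEQ_inverse_real_of_nat)
      then show ?thesis by (intro tendsto_ereal) simp
    qed
    show "f x \<le> ereal v"
      by (rule LIMSEQ_le_const[OF lim]) (metis C H less_imp_le order.trans)
  qed
qed

lemma AE_witness:
  assumes "AE x in M. \<Phi> x" "B \<in> sets M" "emeasure M B \<noteq> 0"
  shows "\<exists>x\<in>B. \<Phi> x"
proof (rule ccontr)
  assume "\<not> (\<exists>x\<in>B. \<Phi> x)"
  from assms(1) obtain N where N: "{x\<in>space M. \<not> \<Phi> x} \<subseteq> N" "emeasure M N = 0" "N \<in> sets M"
    by (rule AE_E)
  have "B \<subseteq> N" using N(1) sets.sets_into_space[OF assms(2)] \<open>\<not> (\<exists>x\<in>B. \<Phi> x)\<close> by blast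
  then have "emeasure M B \<le> emeasure M N" using N(3) by (rule emeasure_mono)
  then show False using N(2) assms(3) by simp
qed



locale SU =
  fixes a c :: "real^'n" and l Q :: real and j1 :: "'n \<Rightarrow> nat"
  assumes l_pos: "l > 0" and Q_ge: "Q \<ge> 1" and j1: "\<And>i. j1 i < 2"
    and c_eq: "c = (1/2) *\<^sub>R a + (l/2) *\<^sub>R (\<chi> i. real (j1 i))"
begin

definition "N = (2::real)^CARD('n)"
definition "P = cube a l"
definition "\<phi> = (\<lambda>z::real^'n. c + (1/2) *\<^sub>R z)"
definition "P1 = \<phi> ` P"
definition "D = dyadic_subcubes a l"

lemma chi0: "(\<chi> i. (0::real)) = 0" by (simp add: vec_eq_iff)

lemma gen_cube: "R \<in> dyadic_gen a l k \<longleftrightarrow> (\<exists>j. (\<forall>i. j i < 2^k) \<and> R = cube (a + (l/2^k) *\<^sub>R (\<chi> i. real (j i))) (l/2^k))"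
  by (auto simp: dyadic_gen_def)

lemma phi_cube: "\<phi> ` cube b s = cube (c + (1/2) *\<^sub>R b) (s/2)"
  using cube_image[of "1/2" c b s] by (simp add: \<phi>_def)

lemma gen_phi:
  "\<phi> ` cube (a + (l/2^k) *\<^sub>R (\<chi> i. real (j i))) (l/2^k) =
    cube (a + (l/2^Suc k) *\<^sub>R (\<chi> i. real (2^k * j1 i + j i))) (l/2^Suc k)"
proof -
  have "c + (1/2) *\<^sub>R (a + (l/2^k) *\<^sub>R (\<chi> i. real (j i))) = a + (l/2^Suc k) *\<^sub>R (\<chi> i. real (2^k * j1 i + j i))"
    by (simp add: c_eq vec_eq_iff field_simps)
  then show ?thesis by (simp add: phi_cube mult.commute)
qed

lemma P_gen0: "P = cube (a + (l/2^0) *\<^sub>R (\<chi> i. real ((\<lambda>_. 0::nat) i))) (l/2^0)"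
  by (simp add: P_def chi0)

lemma D_phi_gen: "R \<in> dyadic_gen a l k \<Longrightarrow> \<phi> ` R \<in> dyadic_gen a l (Suc k)"
proof -
  assume "R \<in> dyadic_gen a l k"
  then obtain j where j: "\<forall>i. j i < 2^k" "R = cube (a + (l/2^k) *\<^sub>R (\<chi> i. real (j i))) (l/2^k)"
    by (auto simp: gen_cube)
  have "2^k * j1 i + j i < 2^Suc k" for i
  proof -
    have "j1 i \<le> 1" using j1[of i] by simp
    then have h: "2^k * j1 i \<le> (2::nat)^k * 1" by (rule mult_le_mono2)
    have "j i < 2^k" using spec[OF j(1), of i] .
    then show ?thesis using h by (simp only: power_Suc mult_1_right)
  qed
  then show ?thesis unfolding j(2) gen_phi gen_cube
    by (intro exI[where x="\<lambda>i. 2^k * j1 i + j i"]) simp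
qed

lemma P1_cube: "P1 = cube (a + (l/2) *\<^sub>R (\<chi> i. real (j1 i))) (l/2)"
  using gen_phi[where k=0 and j="\<lambda>_. 0"] by (simp add: P1_def P_def chi0)

lemma D_split:
  assumes "R \<in> dyadic_gen a l (Suc k)"
  shows "(\<exists>R'\<in>dyadic_gen a l k. R = \<phi> ` R') \<or> R \<inter> P1 = {}"
proof -
  obtain j where j: "\<forall>i. j i < 2^Suc k" "R = cube (a + (l/2^Suc k) *\<^sub>R (\<chi> i. real (j i))) (l/2^Suc k)"
    using assms by (auto simp: gen_cube)
  show ?thesis
  proof (cases "\<forall>i. j i div 2^k = j1 i")
    case True
    define j' where "j' = (\<lambda>i. j i mod 2^k)"
    have "j i = 2^k * j1 i + j' i" for i using True div_mult_mod_eq[of "j i" "2^k"]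
      by (simp add: j'_def mult.commute)
    then have "R = \<phi> ` cube (a + (l/2^k) *\<^sub>R (\<chi> i. real (j' i))) (l/2^k)"
      unfolding gen_phi j(2) by simp
    moreover have "cube (a + (l/2^k) *\<^sub>R (\<chi> i. real (j' i))) (l/2^k) \<in> dyadic_gen a l k"
      unfolding gen_cube j'_def by (rule exI[where x="\<lambda>i. j i mod 2^k"]) simp
    ultimately show ?thesis by blast
  next
    case False
    then obtain i where i: "j i div 2^k \<noteq> j1 i" by blast
    have "R \<inter> P1 = {}"
    proof (rule ccontr)
      assume "R \<inter> P1 \<noteq> {}"
      then obtain x where "x \<in> R" "x \<in> P1" by blast
      define u where "u = l / 2^Suc k"
      have u: "u > 0" using l_pos by (simp add: u_def)
      have l2: "l/2 = u * 2^k" by (simp add: u_def)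
      have A: "a$i + u * real (j i) \<le> x$i" "x$i < a$i + u * real (j i) + u"
        using \<open>x \<in> R\<close> by (auto simp: j(2) cube_def u_def)
      have B: "a$i + u * 2^k * real (j1 i) \<le> x$i" "x$i < a$i + u * 2^k * real (j1 i) + u * 2^k"
        using \<open>x \<in> P1\<close> by (auto simp: P1_cube cube_def l2)
      have "u * real (j i) < u * (2^k * (real (j1 i) + 1))" using A B by (simp add: algebra_simps)
      then have "real (j i) < 2^k * (real (j1 i) + 1)" using u by simp
      then have "real (j i) < real (2^k * Suc (j1 i))" by (simp add: algebra_simps)
      then have c1: "j i < 2^k * Suc (j1 i)" by (simp only: of_nat_less_iff)
      have "u * (2^k * real (j1 i)) < u * (real (j i) + 1)" using A B by (simp add: algebra_simps)
      then have "2^k * real (j1 i) < real (j i) + 1" using u by simp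
      then have "real (2^k * j1 i) < real (j i + 1)" by simp
      then have "2^k * j1 i < j i + 1" by (simp only: of_nat_less_iff)
      then have c2: "2^k * j1 i \<le> j i" by simp
      have "j i div 2^k = j1 i" by (rule div_nat_eqI) (use c1 c2 in \<open>auto simp: mult.commute\<close>)
      then show False using i by simp
    qed
    then show ?thesis by blast
  qed
qed

lemma gen_sub: assumes "R \<in> dyadic_gen a l k" shows "R \<subseteq> P" "\<exists>b s. s > 0 \<and> R = cube b s"
proof -
  obtain j where j: "\<forall>i. j i < 2^k" "R = cube (a + (l/2^k) *\<^sub>R (\<chi> i. real (j i))) (l/2^k)"
    using assms by (auto simp: gen_cube)
  show "\<exists>b s. s > 0 \<and> R = cube b s" using j(2) l_pos
    by (intro exI[where x="a + (l/2^k) *\<^sub>R (\<chi> i. real (j i))"] exI[where x="l/2^k"]) simp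
  show "R \<subseteq> P"
  proof
    fix x assume x: "x \<in> R"
    define u where "u = l / 2^k"
    have u: "u > 0" using l_pos by (simp add: u_def)
    have lu: "l = u * 2^k" by (simp add: u_def)
    { fix i
      have A: "a$i + u * real (j i) \<le> x$i" "x$i < a$i + u * real (j i) + u"
        using x by (auto simp: j(2) cube_def u_def)
      have "j i + 1 \<le> 2^k" using spec[OF j(1), of i] by simp
      then have "real (j i + 1) \<le> real ((2::nat)^k)" by (simp only: of_nat_le_iff)
      then have "real (j i) + 1 \<le> 2^k" by simp
      then have "u * (real (j i) + 1) \<le> u * 2^k" using u by simp
      then have "u * real (j i) + u \<le> l" using lu by (simp add: algebra_simps)
      moreover have "0 \<le> u * real (j i)" using u by simp
      ultimately have "a$i \<le> x$i \<and> x$i < a$i + l" using A by linarith }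
    then show "x \<in> P" by (simp add: P_def cube_def)
  qed
qed

lemma D_P: "P \<in> D"
proof -
  have "P \<in> dyadic_gen a l 0" unfolding gen_cube
    by (rule exI[where x="\<lambda>_. 0"]) (simp add: P_def chi0)
  then show ?thesis unfolding D_def dyadic_subcubes_def by blast
qed

lemma D_phi: "R \<in> D \<Longrightarrow> \<phi> ` R \<in> D"
  unfolding D_def dyadic_subcubes_def using D_phi_gen by blast

lemma D_sub: "R \<in> D \<Longrightarrow> R \<subseteq> P"
  unfolding D_def dyadic_subcubes_def using gen_sub by blast

lemma D_cube: "R \<in> D \<Longrightarrow> \<exists>b s. s > 0 \<and> R = cube b s"
  unfolding D_def dyadic_subcubes_def using gen_sub by blast

lemma D_cases: "R \<in> D \<Longrightarrow> R = P \<or> (\<exists>R'\<in>D. R = \<phi> ` R') \<or> R \<inter> P1 = {}"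
proof -
  assume "R \<in> D"
  then obtain k where k: "R \<in> dyadic_gen a l k" by (auto simp: D_def dyadic_subcubes_def)
  show ?thesis
  proof (cases k)
    case 0
    then have "R = P" using k by (auto simp: gen_cube P_def chi0)
    then show ?thesis by simp
  next
    case (Suc m)
    then show ?thesis using D_split[of R m] k by (auto simp: D_def dyadic_subcubes_def)
  qed
qed

end


context SU begin

lemma P_leb: "P \<in> sets lebesgue" by (simp add: P_def cube_leb)
lemma P_lmeas: "P \<in> lmeasurable" by (simp add: P_def cube_lmeas)
lemma P_pos: "measure lebesgue P > 0" using l_pos by (simp add: P_def cube_pos)
lemma P_fin: "emeasure lebesgue P < \<infinity>" using P_lmeas unfolding fmeasurable_def by blast

lemma N_ge2: "N \<ge> 2"
proof -
  have "CARD('n) \<ge> 1" by (simp add: Suc_leI)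
  then have "(2::real)^1 \<le> 2^CARD('n)" by (rule power_increasing) simp
  then show ?thesis by (simp add: N_def)
qed

lemma phi_alt: "\<phi> ` S = (\<lambda>x. (1/2) *\<^sub>R x + c) ` S"
  by (simp add: \<phi>_def add.commute)

lemma meas_phi: "measure lebesgue (\<phi> ` S) = measure lebesgue S / N"
  unfolding phi_alt measure_lebesgue_affine by (simp add: N_def power_one_over)

lemma psi_phi: "2 *\<^sub>R (\<phi> y - c) = y" by (simp add: \<phi>_def)

lemma phi_inj: "inj \<phi>" by (metis psi_phi injI)

lemma leb_phi: assumes "S \<in> sets lebesgue" shows "\<phi> ` S \<in> sets lebesgue"
proof -
  have "\<phi> ` S = (\<lambda>z. (-2) *\<^sub>R c + 2 *\<^sub>R z) -` S \<inter> space lebesgue"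
  proof (intro equalityI subsetI)
    fix z assume "z \<in> \<phi> ` S"
    then obtain x where "x \<in> S" "z = c + (1/2) *\<^sub>R x" by (auto simp: \<phi>_def)
    then show "z \<in> (\<lambda>z. (-2) *\<^sub>R c + 2 *\<^sub>R z) -` S \<inter> space lebesgue" by (simp add: algebra_simps)
  next
    fix z assume "z \<in> (\<lambda>z. (-2) *\<^sub>R c + 2 *\<^sub>R z) -` S \<inter> space lebesgue"
    then have "(-2) *\<^sub>R c + 2 *\<^sub>R z \<in> S" by simp
    moreover have "z = c + (1/2) *\<^sub>R ((-2) *\<^sub>R c + 2 *\<^sub>R z)" by (simp add: algebra_simps)
    ultimately show "z \<in> \<phi> ` S" unfolding \<phi>_def by blast
  qed
  also have "\<dots> \<in> sets lebesgue"
    by (rule measurable_sets[OF aff_meas assms])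
  finally show ?thesis .
qed

lemma P1_D: "P1 \<in> D" unfolding P1_def by (intro D_phi D_P)
lemma P1_sub: "P1 \<subseteq> P" using P1_D D_sub by blast
lemma P1_leb: "P1 \<in> sets lebesgue" unfolding P1_def by (rule leb_phi[OF P_leb])
lemma meas_P1: "measure lebesgue P1 = measure lebesgue P / N" unfolding P1_def by (rule meas_phi)
lemma meas_diff: "measure lebesgue (P - P1) = measure lebesgue P - measure lebesgue P / N"
  using measure_Diff[of lebesgue P P1] P_fin P_leb P1_leb P1_sub meas_P1 by simp
lemma meas_diff_pos: "measure lebesgue (P - P1) > 0"
proof -
  have "measure lebesgue P / N < measure lebesgue P" using P_pos N_ge2 by (simp add: divide_less_eq)
  then show ?thesis using meas_diff by simp
qed
lemma emeas_diff_pos: "emeasure lebesgue (P - P1) \<noteq> 0"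
  using meas_diff_pos by (metis measure_zero_top less_irrefl measure_def enn2real_0)

lemma phi_sub_P1: "R \<subseteq> P \<Longrightarrow> \<phi> ` R \<subseteq> P1" by (auto simp: P1_def)

lemma D_leb: "R \<in> D \<Longrightarrow> R \<in> sets lebesgue" using D_cube cube_leb by blast
lemma D_pos: "R \<in> D \<Longrightarrow> measure lebesgue R > 0" using D_cube cube_pos by blast
lemma D_fin: "R \<in> D \<Longrightarrow> emeasure lebesgue R < \<infinity>"
proof -
  assume "R \<in> D"
  then obtain b s where "R = cube b s" using D_cube by blast
  then have "R \<in> lmeasurable" by (simp add: cube_lmeas)
  then show ?thesis unfolding fmeasurable_def by blast
qed

lemma avg_abs:
  assumes "R \<in> sets lebesgue" "R \<subseteq> P" "\<forall>z\<in>P. g z \<ge> 0"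
  shows "avg (\<lambda>x. \<bar>g x\<bar>) R = avg g R"
proof -
  have "wmeas (\<lambda>x. \<bar>g x\<bar>) R = wmeas g R"
    unfolding wmeas_def using assms by (intro set_lebesgue_integral_cong) auto
  then show ?thesis by (simp add: avg_def)
qed

definition "\<alpha> = (N*Q - (N-1))/Q"
definition "T w = Top N Q c P1 w"

lemma Q_pos: "Q > 0" using Q_ge by simp

lemma alpha_ge1: "\<alpha> \<ge> 1"
proof -
  have "(N-1) * 1 \<le> (N-1) * Q" using N_ge2 Q_ge by (intro mult_left_mono) auto
  then have "Q \<le> N*Q - (N-1)" by (simp add: algebra_simps)
  then show ?thesis using Q_pos by (simp add: \<alpha>_def le_divide_eq)
qed

lemma alphaN: "\<alpha> / N = 1 - (N-1)/(N*Q)"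
  using N_ge2 Q_pos by (simp add: \<alpha>_def field_simps)

lemma T_phi: "y \<in> P \<Longrightarrow> T w (\<phi> y) = \<alpha> * w y"
  by (simp add: T_def Top_def P1_def \<alpha>_def psi_phi)

lemma T_out: "z \<notin> P1 \<Longrightarrow> T w z = 1"
  by (simp add: T_def Top_def)

lemma T_nonneg: assumes "\<forall>z\<in>P. 0 \<le> w z" "z \<in> P" shows "0 \<le> T w z"
proof (cases "z \<in> P1")
  case True
  then obtain y where "y \<in> P" "z = \<phi> y" by (auto simp: P1_def)
  then show ?thesis using T_phi[of y w] assms alpha_ge1 by simp
next
  case False then show ?thesis by (simp add: T_out)
qed

lemma T_int_phi:
  assumes wi: "set_integrable lebesgue P w" and R: "R \<subseteq> P" "R \<in> sets lebesgue"
  shows "set_integrable lebesgue (\<phi> ` R) (T w) \<and> wmeas (T w) (\<phi> ` R) = \<alpha> / N * wmeas w R"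
proof -
  have wR: "set_integrable lebesgue R w" by (rule set_integrable_subset[OF wi R(2) R(1)])
  have eq: "T w (c + (1/2) *\<^sub>R x) = \<alpha> * w x" if "x \<in> R" for x
    using T_phi[of x w] that R(1) by (auto simp: \<phi>_def)
  have g: "set_integrable lebesgue R (\<lambda>x. T w (c + (1/2) *\<^sub>R x))"
    using set_integrable_mult_right[of \<alpha> lebesgue R w] wR
    by (subst set_integrable_cong[OF refl refl eq]) auto
  have phiR: "\<phi> ` R = (\<lambda>x. c + (1/2) *\<^sub>R x) ` R" by (simp add: \<phi>_def)
  note cv[of "1/2" R "T w" c, OF _ R(2) g]
  moreover have "(LINT x:R|lebesgue. T w (c + (1/2) *\<^sub>R x)) = \<alpha> * wmeas w R"
    unfolding wmeas_def using eq R(2) by (subst set_lebesgue_integral_cong[where g="\<lambda>x. \<alpha> * w x"]) auto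
  ultimately show ?thesis unfolding phiR wmeas_def by (simp add: N_def power_one_over)
qed

lemma T_int_P:
  assumes wi: "set_integrable lebesgue P w"
  shows "set_integrable lebesgue P (T w) \<and>
    wmeas (T w) P = \<alpha> / N * wmeas w P + (measure lebesgue P - measure lebesgue P / N)"
proof -
  have A: "set_integrable lebesgue P1 (T w)" "wmeas (T w) P1 = \<alpha> / N * wmeas w P"
    using T_int_phi[OF wi subset_refl P_leb] by (simp_all add: P1_def)
  have DL: "P - P1 \<in> sets lebesgue" using P_leb P1_leb by auto
  have DF: "emeasure lebesgue (P - P1) < \<infinity>"
    using P_fin emeasure_mono[of "P - P1" P lebesgue] P_leb by (meson Diff_subset le_less_trans)
  have one: "set_integrable lebesgue (P - P1) (\<lambda>_. 1::real)"
    unfolding set_integrable_def using DL DF by simp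
  have B: "set_integrable lebesgue (P - P1) (T w)"
    using one by (subst set_integrable_cong[OF refl refl, where f'="\<lambda>_. 1"]) (auto simp: T_out)
  have B2: "wmeas (T w) (P - P1) = measure lebesgue (P - P1)"
  proof -
    have "wmeas (T w) (P - P1) = (LINT x:(P - P1)|lebesgue. (1::real))"
      unfolding wmeas_def using DL by (intro set_lebesgue_integral_cong) (auto simp: T_out)
    also have "\<dots> = measure lebesgue (P - P1)" using DL DF by (simp add: set_integral_const)
    finally show ?thesis .
  qed
  have PU: "P = P1 \<union> (P - P1)" using P1_sub by auto
  have "set_integrable lebesgue P (T w)"
    using set_integrable_Un[OF A(1) B P1_leb DL] PU by simp
  moreover have "wmeas (T w) P = wmeas (T w) P1 + wmeas (T w) (P - P1)"
    unfolding wmeas_def using set_integral_Un[of P1 "P - P1" lebesgue "T w"] A(1) B PU by auto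
  ultimately show ?thesis using A(2) B2 meas_diff by simp
qed

lemma T_avg:
  assumes wi: "set_integrable lebesgue P w" and av: "avg w P = Q"
  shows "avg (T w) P = Q"
proof -
  let ?m = "measure lebesgue P"
  have wP: "wmeas w P = Q * ?m" using av P_pos by (simp add: avg_def field_simps)
  have "wmeas (T w) P = \<alpha> / N * (Q * ?m) + (?m - ?m / N)" using T_int_P[OF wi] wP by simp
  also have "\<dots> = Q * ?m" using N_ge2 Q_pos by (simp add: \<alpha>_def field_simps)
  finally show ?thesis using P_pos by (simp add: avg_def)
qed

lemma avg_out:
  assumes R: "R \<in> D" "R \<inter> P1 = {}"
  shows "avg (\<lambda>x. \<bar>T w x\<bar>) R = 1"
proof -
  have "wmeas (\<lambda>x. \<bar>T w x\<bar>) R = (LINT x:R|lebesgue. (1::real))"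
  proof -
    have "\<forall>x\<in>R. x \<notin> P1" using R(2) by blast
    then show ?thesis
      unfolding wmeas_def using R D_leb by (intro set_lebesgue_integral_cong) (auto simp: T_out)
  qed
  also have "\<dots> = measure lebesgue R" using D_leb[OF R(1)] D_fin[OF R(1)] by (simp add: set_integral_const)
  finally show ?thesis using D_pos[OF R(1)] by (simp add: avg_def)
qed

lemma avg_phi:
  assumes wn: "\<forall>z\<in>P. 0 \<le> w z" and wi: "set_integrable lebesgue P w" and R: "R \<in> D"
  shows "avg (\<lambda>x. \<bar>T w x\<bar>) (\<phi> ` R) = \<alpha> * avg (\<lambda>x. \<bar>w x\<bar>) R"
proof -
  have RP: "R \<subseteq> P" "R \<in> sets lebesgue" using R D_sub D_leb by auto
  have "avg (\<lambda>x. \<bar>T w x\<bar>) (\<phi> ` R) = avg (T w) (\<phi> ` R)"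
    using avg_abs[OF leb_phi[OF RP(2)]] phi_sub_P1[OF RP(1)] P1_sub T_nonneg[OF wn] by blast
  also have "\<dots> = \<alpha> / N * wmeas w R / (measure lebesgue R / N)"
    using T_int_phi[OF wi RP] by (simp add: avg_def meas_phi)
  also have "\<dots> = \<alpha> * avg w R" using N_ge2 by (simp add: avg_def)
  also have "avg w R = avg (\<lambda>x. \<bar>w x\<bar>) R" using avg_abs[OF RP(2) RP(1) wn] by simp
  finally show ?thesis .
qed

end


lemma AE_aff_pull:
  fixes t :: "'a::euclidean_space"
  assumes c: "c \<noteq> 0" and ae: "AE y in lebesgue. \<Phi> y"
  shows "AE z in lebesgue. \<Phi> (t + c *\<^sub>R z)"
proof -
  from ae obtain N where N: "{x\<in>space lebesgue. \<not> \<Phi> x} \<subseteq> N" "emeasure lebesgue N = 0" "N \<in> sets lebesgue"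
    by (rule AE_E)
  define N' where "N' = (\<lambda>z. t + c *\<^sub>R z) -` N \<inter> space lebesgue"
  have N'm: "N' \<in> sets lebesgue" unfolding N'_def by (rule measurable_sets[OF aff_meas N(3)])
  have "N' = (\<lambda>y. (1/c) *\<^sub>R y + (- (1/c) *\<^sub>R t)) ` N"
  proof (intro equalityI subsetI)
    fix z assume "z \<in> N'"
    then have "t + c *\<^sub>R z \<in> N" by (simp add: N'_def)
    moreover have "z = (1/c) *\<^sub>R (t + c *\<^sub>R z) + (- (1/c) *\<^sub>R t)" using c by (simp add: algebra_simps)
    ultimately show "z \<in> (\<lambda>y. (1/c) *\<^sub>R y + (- (1/c) *\<^sub>R t)) ` N" by blast
  next
    fix z assume "z \<in> (\<lambda>y. (1/c) *\<^sub>R y + (- (1/c) *\<^sub>R t)) ` N"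
    then obtain y where "y \<in> N" "z = (1/c) *\<^sub>R y + (- (1/c) *\<^sub>R t)" by blast
    have "t + c *\<^sub>R z = y" using c unfolding \<open>z = _\<close> by (simp add: scaleR_add_right scaleR_diff_right)
    then show "z \<in> N'" using \<open>y \<in> N\<close> by (simp add: N'_def)
  qed
  then have "emeasure lebesgue N' = 0" using N(2) emeasure_lebesgue_affine[of "1/c" "- (1/c) *\<^sub>R t" N] by simp
  then have "N' \<in> null_sets lebesgue" using N'm by (simp add: null_sets_def)
  moreover have "{z\<in>space lebesgue. \<not> \<Phi> (t + c *\<^sub>R z)} \<subseteq> N'" using N(1) by (auto simp: N'_def)
  ultimately show ?thesis by (rule AE_I')
qed

context SU begin

definition "Inv w \<longleftrightarrow> (\<forall>z\<in>P. 0 \<le> w z) \<and> set_integrable lebesgue P w \<and> avg w P = Q \<and>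
   (AE z in lebesgue. z \<in> P \<longrightarrow> 1 \<le> w z \<and> dyadic_max a l w z \<le> ereal (Q * w z))"

lemma dmax: "dyadic_max a l g z = (SUP R \<in> {R \<in> D. z \<in> R}. ereal (avg (\<lambda>x. \<bar>g x\<bar>) R))"
  by (simp add: dyadic_max_def D_def)

lemma avgT_P:
  assumes wn: "\<forall>z\<in>P. 0 \<le> w z" and wi: "set_integrable lebesgue P w" and av: "avg w P = Q"
  shows "avg (\<lambda>x. \<bar>T w x\<bar>) P = Q"
  using avg_abs[OF P_leb subset_refl] T_nonneg[OF wn] T_avg[OF wi av] by simp

lemma M_out:
  assumes wn: "\<forall>z\<in>P. 0 \<le> w z" and wi: "set_integrable lebesgue P w" and av: "avg w P = Q"
    and z: "z \<in> P" "z \<notin> P1"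
  shows "dyadic_max a l (T w) z = ereal Q"
proof -
  have le: "ereal (avg (\<lambda>x. \<bar>T w x\<bar>) R) \<le> ereal Q" if "R \<in> D" "z \<in> R" for R
  proof -
    from D_cases[OF that(1)] consider "R = P" | R' where "R' \<in> D" "R = \<phi> ` R'" | "R \<inter> P1 = {}" by blast
    then show ?thesis
    proof cases
      case 1 then show ?thesis using avgT_P[OF wn wi av] by simp
    next
      case 2 then have "R \<subseteq> P1" using phi_sub_P1 D_sub by blast
      then show ?thesis using that z by blast
    next
      case 3 then show ?thesis using avg_out[OF that(1)] Q_ge by simp
    qed
  qed
  have "ereal (avg (\<lambda>x. \<bar>T w x\<bar>) P) \<le> dyadic_max a l (T w) z"
    unfolding dmax using D_P z(1) by (intro SUP_upper) auto
  then have "ereal Q \<le> dyadic_max a l (T w) z" using avgT_P[OF wn wi av] by simp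
  moreover have "dyadic_max a l (T w) z \<le> ereal Q" unfolding dmax using le by (intro SUP_least) auto
  ultimately show ?thesis by simp
qed

lemma M_in:
  assumes wn: "\<forall>z\<in>P. 0 \<le> w z" and wi: "set_integrable lebesgue P w" and av: "avg w P = Q"
    and y: "y \<in> P"
  shows "dyadic_max a l (T w) (\<phi> y) \<le> max (ereal Q) (ereal \<alpha> * dyadic_max a l w y)"
  unfolding dmax[of "T w"]
proof (rule SUP_least)
  fix R assume "R \<in> {R \<in> D. \<phi> y \<in> R}"
  then have R: "R \<in> D" "\<phi> y \<in> R" by auto
  have yP1: "\<phi> y \<in> P1" using y by (simp add: P1_def)
  from D_cases[OF R(1)] consider "R = P" | R' where "R' \<in> D" "R = \<phi> ` R'" | "R \<inter> P1 = {}" by blast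
  then show "ereal (avg (\<lambda>x. \<bar>T w x\<bar>) R) \<le> max (ereal Q) (ereal \<alpha> * dyadic_max a l w y)"
  proof cases
    case 1 then show ?thesis using avgT_P[OF wn wi av] by simp
  next
    case 2
    then have yR: "y \<in> R'" using R(2) phi_inj by (auto simp: inj_image_mem_iff)
    have "ereal (avg (\<lambda>x. \<bar>T w x\<bar>) R) = ereal \<alpha> * ereal (avg (\<lambda>x. \<bar>w x\<bar>) R')"
      using avg_phi[OF wn wi 2(1)] 2(2) by simp
    also have "\<dots> \<le> ereal \<alpha> * dyadic_max a l w y"
      unfolding dmax using alpha_ge1 yR 2(1) by (intro ereal_mult_left_mono SUP_upper) auto
    finally show ?thesis by (simp add: le_max_iff_disj)
  next
    case 3 then show ?thesis using R(2) yP1 by blast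
  qed
qed

lemma Inv_AE_T:
  assumes I: "Inv w"
  shows "AE z in lebesgue. z \<in> P \<longrightarrow> 1 \<le> T w z \<and> dyadic_max a l (T w) z \<le> ereal (Q * T w z)"
proof -
  have wn: "\<forall>z\<in>P. 0 \<le> w z" and wi: "set_integrable lebesgue P w" and av: "avg w P = Q"
    and ae: "AE z in lebesgue. z \<in> P \<longrightarrow> 1 \<le> w z \<and> dyadic_max a l w z \<le> ereal (Q * w z)"
    using I by (auto simp: Inv_def)
  have ae2: "AE z in lebesgue. ((-2) *\<^sub>R c + 2 *\<^sub>R z) \<in> P \<longrightarrow> 1 \<le> w ((-2) *\<^sub>R c + 2 *\<^sub>R z) \<and>
     dyadic_max a l w ((-2) *\<^sub>R c + 2 *\<^sub>R z) \<le> ereal (Q * w ((-2) *\<^sub>R c + 2 *\<^sub>R z))"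
    by (rule AE_aff_pull[OF _ ae]) simp
  show ?thesis
  proof (rule eventually_mono[OF ae2], intro impI)
    fix z assume H: "((-2) *\<^sub>R c + 2 *\<^sub>R z) \<in> P \<longrightarrow> 1 \<le> w ((-2) *\<^sub>R c + 2 *\<^sub>R z) \<and>
     dyadic_max a l w ((-2) *\<^sub>R c + 2 *\<^sub>R z) \<le> ereal (Q * w ((-2) *\<^sub>R c + 2 *\<^sub>R z))"
      and zP: "z \<in> P"
    show "1 \<le> T w z \<and> dyadic_max a l (T w) z \<le> ereal (Q * T w z)"
    proof (cases "z \<in> P1")
      case True
      then obtain y where y: "y \<in> P" "z = \<phi> y" by (auto simp: P1_def)
      have yy: "(-2) *\<^sub>R c + 2 *\<^sub>R z = y" using y(2) by (simp add: \<phi>_def algebra_simps)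
      have w1: "1 \<le> w y" and Mw: "dyadic_max a l w y \<le> ereal (Q * w y)" using H y(1) unfolding yy by auto
      have Tz: "T w z = \<alpha> * w y" using T_phi[OF y(1)] y(2) by simp
      have aw: "1 \<le> \<alpha> * w y" using alpha_ge1 w1 by (metis mult_mono' mult_1_left zero_le_one order.trans)
      have "dyadic_max a l (T w) z \<le> max (ereal Q) (ereal \<alpha> * dyadic_max a l w y)"
        using M_in[OF wn wi av y(1)] y(2) by simp
      also have "\<dots> \<le> ereal (Q * (\<alpha> * w y))"
      proof (rule max.boundedI)
        show "ereal Q \<le> ereal (Q * (\<alpha> * w y))" using aw Q_pos by simp
        have "ereal \<alpha> * dyadic_max a l w y \<le> ereal \<alpha> * ereal (Q * w y)"
          using Mw alpha_ge1 by (intro ereal_mult_left_mono) auto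
        then show "ereal \<alpha> * dyadic_max a l w y \<le> ereal (Q * (\<alpha> * w y))" by (simp add: ac_simps)
      qed
      finally show ?thesis using Tz aw by simp
    next
      case False
      then show ?thesis using M_out[OF wn wi av zP False] T_out[OF False] by simp
    qed
  qed
qed

lemma P_space: "P \<inter> space lebesgue \<in> sets lebesgue" using P_leb by simp

lemma step:
  assumes I: "Inv w"
  shows "Inv (T w) \<and> A1_const a l (T w) = ereal Q \<and> ess_inf_on P (\<lambda>z. ereal (T w z)) = 1"
proof -
  have wn: "\<forall>z\<in>P. 0 \<le> w z" and wi: "set_integrable lebesgue P w" and av: "avg w P = Q"
    using I by (auto simp: Inv_def)
  have ae: "AE z in lebesgue. z \<in> P \<longrightarrow> 1 \<le> T w z \<and> dyadic_max a l (T w) z \<le> ereal (Q * T w z)"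
    by (rule Inv_AE_T[OF I])
  have I2: "Inv (T w)"
    unfolding Inv_def using T_nonneg[OF wn] T_int_P[OF wi] T_avg[OF wi av] ae by auto
  have ratio: "dyadic_max a l (T w) z / ereal (T w z) \<le> ereal Q"
    if "1 \<le> T w z" "dyadic_max a l (T w) z \<le> ereal (Q * T w z)" for z
  proof -
    have "dyadic_max a l (T w) z \<le> ereal (T w z) * ereal Q" using that by (simp add: ac_simps)
    then show ?thesis using that(1) by (subst ereal_divide_le_pos) auto
  qed
  have outval: "dyadic_max a l (T w) z / ereal (T w z) = ereal Q" if "z \<in> P - P1" for z
    using M_out[OF wn wi av] T_out that by simp
  have A1: "A1_const a l (T w) = ereal Q"
    unfolding A1_const_def ess_sup_on_def P_def[symmetric]
  proof (rule order.antisym)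
    have "AE z in lebesgue_on P. dyadic_max a l (T w) z / ereal (T w z) \<le> ereal Q"
      unfolding AE_restrict_space_iff[OF P_space] using ae ratio by (auto elim: eventually_mono)
    then show "Inf {c. AE z in lebesgue_on P. dyadic_max a l (T w) z / ereal (T w z) \<le> c} \<le> ereal Q"
      by (intro Inf_lower) simp
  next
    show "ereal Q \<le> Inf {c. AE z in lebesgue_on P. dyadic_max a l (T w) z / ereal (T w z) \<le> c}"
    proof (rule Inf_greatest)
      fix c assume "c \<in> {c. AE z in lebesgue_on P. dyadic_max a l (T w) z / ereal (T w z) \<le> c}"
      then have "AE z in lebesgue. z \<in> P \<longrightarrow> dyadic_max a l (T w) z / ereal (T w z) \<le> c"
        by (simp add: AE_restrict_space_iff[OF P_space])
      then obtain z where "z \<in> P - P1" "dyadic_max a l (T w) z / ereal (T w z) \<le> c"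
        using AE_witness[of _ lebesgue "P - P1"] P_leb P1_leb emeas_diff_pos by (metis (no_types, lifting) Diff_iff sets.Diff)
      then show "ereal Q \<le> c" using outval by simp
    qed
  qed
  have EI: "ess_inf_on P (\<lambda>z. ereal (T w z)) = 1"
    unfolding ess_inf_on_def
  proof (rule order.antisym)
    show "Sup {c. AE z in lebesgue_on P. c \<le> ereal (T w z)} \<le> 1"
    proof (rule Sup_least)
      fix c assume "c \<in> {c. AE z in lebesgue_on P. c \<le> ereal (T w z)}"
      then have "AE z in lebesgue. z \<in> P \<longrightarrow> c \<le> ereal (T w z)"
        by (simp add: AE_restrict_space_iff[OF P_space])
      then obtain z where "z \<in> P - P1" "c \<le> ereal (T w z)"
        using AE_witness[of _ lebesgue "P - P1"] P_leb P1_leb emeas_diff_pos by (metis (no_types, lifting) Diff_iff sets.Diff)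
      then show "c \<le> 1" using T_out by (simp add: one_ereal_def)
    qed
  next
    have "AE z in lebesgue_on P. 1 \<le> ereal (T w z)"
      unfolding AE_restrict_space_iff[OF P_space] using ae by (auto elim: eventually_mono)
    then show "1 \<le> Sup {c. AE z in lebesgue_on P. c \<le> ereal (T w z)}"
      by (intro Sup_upper) simp
  qed
  show ?thesis using I2 A1 EI by simp
qed

lemma init:
  assumes wn: "\<forall>z\<in>P. 0 \<le> w z" and wi: "set_integrable lebesgue P w" and av: "avg w P = Q"
    and ei: "ess_inf_on P (\<lambda>z. ereal (w z)) = 1" and A: "A1_const a l w = ereal Q"
  shows "Inv w"
proof -
  have a1: "AE z in lebesgue_on P. ereal 1 \<le> ereal (w z)"
    using ei unfolding ess_inf_on_def by (intro AE_ge_of_Sup) simp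
  have a2: "AE z in lebesgue_on P. dyadic_max a l w z / ereal (w z) \<le> ereal Q"
    using A unfolding A1_const_def ess_sup_on_def P_def[symmetric] by (intro AE_le_of_Inf) simp
  have "AE z in lebesgue_on P. 1 \<le> w z \<and> dyadic_max a l w z \<le> ereal (Q * w z)"
    using a1 a2
  proof (eventually_elim)
    case (elim z)
    then have w1: "1 \<le> w z" by simp
    then have "dyadic_max a l w z \<le> ereal (w z) * ereal Q" using elim(2)
      by (subst ereal_divide_le_pos[symmetric]) auto
    then show ?case using w1 by (simp add: ac_simps)
  qed
  then have "AE z in lebesgue. z \<in> P \<longrightarrow> 1 \<le> w z \<and> dyadic_max a l w z \<le> ereal (Q * w z)"
    by (rule AE_restrict_space_iff[OF P_space, THEN iffD1])
  then show ?thesis using wn wi av by (simp add: Inv_def)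
qed

lemma avg_ind:
  assumes "E \<subseteq> P" "E \<in> sets lebesgue"
  shows "avg (indicator E) P = measure lebesgue E / measure lebesgue P"
proof -
  have "wmeas (indicator E) P = integral\<^sup>L lebesgue (indicator E :: _ \<Rightarrow> real)"
    unfolding wmeas_def set_lebesgue_integral_def using assms(1)
    by (intro Bochner_Integration.integral_cong) (auto simp: indicator_def)
  also have "\<dots> = measure lebesgue E" by simp
  finally show ?thesis by (simp add: avg_def)
qed

end


theorem mainTheorem6:
  fixes a c :: "real^'n" and l Q :: real and P1 :: "(real^'n) set"
    and w0 :: "real^'n \<Rightarrow> real"
  defines "N \<equiv> (2::real) ^ CARD('n)"
  defines "P \<equiv> cube a l"
  defines "\<phi> \<equiv> (\<lambda>z::real^'n. c + (1/2) *\<^sub>R z)"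
  defines "w \<equiv> (\<lambda>k. (Top N Q c P1 ^^ k) w0)"
  defines "E \<equiv> (\<lambda>k. (\<phi> ^^ k) ` P)"
  assumes l_pos: "l > 0"
    and Q_ge: "Q \<ge> 1"
    and P1_child: "P1 \<in> dyadic_gen a l 1"
    and phi_onto: "\<phi> ` P = P1"
    and w0_nonneg: "\<forall>z\<in>P. w0 z \<ge> 0"
    and w0_int: "set_integrable lebesgue P w0"
    and w0_avg: "avg w0 P = Q"
    and w0_inf: "ess_inf_on P (\<lambda>z. ereal (w0 z)) = 1"
    and w0_A1: "A1_const a l w0 = ereal Q"
  shows "\<forall>k. A1_const a l (w k) = ereal Q
           \<and> avg (w k) P = Q
           \<and> ess_inf_on P (\<lambda>z. ereal (w k z)) = 1
           \<and> avg (indicator (E k)) P = 1 / N ^ k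
           \<and> wmeas (w k) (E k) / measure lebesgue P = Q * (1 - (N - 1) / (N * Q)) ^ k"
proof -
  obtain j1 where j1: "\<forall>i. j1 i < 2^1" and P1eq: "P1 = cube (a + (l/2^1) *\<^sub>R (\<chi> i. real (j1 i))) (l/2^1)"
    using P1_child unfolding dyadic_gen_def by blast
  have "\<phi> ` P = cube (c + (1/2) *\<^sub>R a) ((1/2) * l)"
    unfolding \<phi>_def P_def by (rule cube_image) simp
  then have "cube (c + (1/2) *\<^sub>R a) (l/2) = cube (a + (l/2) *\<^sub>R (\<chi> i. real (j1 i))) (l/2)"
    using phi_onto P1eq by simp
  then have "c + (1/2) *\<^sub>R a = a + (l/2) *\<^sub>R (\<chi> i. real (j1 i))"
    by (rule cube_corner[rotated]) (simp add: l_pos)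
  then have H0: "(c + (1/2) *\<^sub>R a)$i = (a + (l/2) *\<^sub>R (\<chi> i. real (j1 i)))$i" for i by simp
  have H: "c$i + (1/2) * a$i = a$i + (l/2) * real (j1 i)" for i using H0[of i] by simp
  have ceq: "c = (1/2) *\<^sub>R a + (l/2) *\<^sub>R (\<chi> i. real (j1 i))"
  proof (rule vec_eq_iff[THEN iffD2], rule allI)
    fix i show "c$i = ((1/2) *\<^sub>R a + (l/2) *\<^sub>R (\<chi> i. real (j1 i)))$i" using H[of i] by simp
  qed
  interpret S: SU a c l Q j1
    by unfold_locales (use l_pos Q_ge j1 ceq in auto)
  have SN: "S.N = N" by (simp add: S.N_def N_def)
  have SP: "S.P = P" by (simp add: S.P_def P_def)
  have Sphi: "S.\<phi> = \<phi>" by (simp add: S.\<phi>_def \<phi>_def)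
  have SP1: "S.P1 = P1" using phi_onto by (simp add: S.P1_def SP Sphi)
  have ST: "S.T = Top N Q c P1" by (simp add: S.T_def[abs_def] SN SP1 fun_eq_iff)
  have wS: "w (Suc k) = S.T (w k)" for k by (simp add: w_def ST)
  have ES: "E (Suc k) = \<phi> ` E k" for k by (simp add: E_def image_comp)
  define \<beta> where "\<beta> = 1 - (N - 1) / (N * Q)"
  have I0: "S.Inv w0" using S.init[of w0] w0_nonneg w0_int w0_avg w0_inf w0_A1 by (simp add: SP)
  have main: "S.Inv (w k) \<and> A1_const a l (w k) = ereal Q \<and> ess_inf_on P (\<lambda>z. ereal (w k z)) = 1 \<and>
     E k \<subseteq> P \<and> E k \<in> sets lebesgue \<and> measure lebesgue (E k) = measure lebesgue P / N^k \<and>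
     wmeas (w k) (E k) = measure lebesgue P * Q * \<beta>^k" for k
  proof (induction k)
    case 0
    have "wmeas w0 P = measure lebesgue P * Q" using w0_avg S.P_pos SP by (simp add: avg_def field_simps)
    then show ?case using I0 w0_A1 w0_inf S.P_leb SP by (simp add: w_def E_def)
  next
    case (Suc k)
    have IH: "S.Inv (w k)" "E k \<subseteq> P" "E k \<in> sets lebesgue" "measure lebesgue (E k) = measure lebesgue P / N^k"
      "wmeas (w k) (E k) = measure lebesgue P * Q * \<beta>^k" using Suc.IH by auto
    have st: "S.Inv (S.T (w k)) \<and> A1_const a l (S.T (w k)) = ereal Q \<and> ess_inf_on P (\<lambda>z. ereal (S.T (w k) z)) = 1"
      using S.step[OF IH(1)] SP by simp
    have wi: "set_integrable lebesgue S.P (w k)" using IH(1) by (simp add: S.Inv_def)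
    have ti: "wmeas (S.T (w k)) (\<phi> ` E k) = S.\<alpha> / N * wmeas (w k) (E k)"
      using S.T_int_phi[OF wi] IH(2,3) SP Sphi SN by simp
    have "E (Suc k) \<subseteq> P" using S.phi_sub_P1[of "E k"] IH(2) S.P1_sub SP Sphi ES by auto
    moreover have "E (Suc k) \<in> sets lebesgue" using S.leb_phi[OF IH(3)] ES Sphi by simp
    moreover have "measure lebesgue (E (Suc k)) = measure lebesgue P / N^Suc k"
      using S.meas_phi[of "E k"] IH(4) ES Sphi SN by simp
    moreover have "wmeas (w (Suc k)) (E (Suc k)) = measure lebesgue P * Q * \<beta>^Suc k"
    proof -
      have aN: "S.\<alpha> / N = \<beta>" using S.alphaN SN by (simp add: \<beta>_def)
      have "wmeas (w (Suc k)) (E (Suc k)) = S.\<alpha> / N * wmeas (w k) (E k)" using ti wS ES by simp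
      also have "\<dots> = \<beta> * (measure lebesgue P * Q * \<beta>^k)" unfolding aN IH(5) ..
      finally show ?thesis by simp
    qed
    ultimately show ?case using st wS by simp
  qed
  show ?thesis
  proof
    fix k
    have I: "S.Inv (w k)" and r: "A1_const a l (w k) = ereal Q" "ess_inf_on P (\<lambda>z. ereal (w k z)) = 1"
      and e: "E k \<subseteq> P" "E k \<in> sets lebesgue" "measure lebesgue (E k) = measure lebesgue P / N^k"
      "wmeas (w k) (E k) = measure lebesgue P * Q * \<beta>^k" using main[of k] by auto
    have "avg (w k) P = Q" using I SP by (simp add: S.Inv_def)
    moreover have "avg (indicator (E k)) P = 1 / N^k"
      using S.avg_ind[of "E k"] e SP S.P_pos by simp
    moreover have "wmeas (w k) (E k) / measure lebesgue P = Q * \<beta>^k"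
      using e(4) S.P_pos SP by simp
    ultimately show "A1_const a l (w k) = ereal Q
           \<and> avg (w k) P = Q
           \<and> ess_inf_on P (\<lambda>z. ereal (w k z)) = 1
           \<and> avg (indicator (E k)) P = 1 / N ^ k
           \<and> wmeas (w k) (E k) / measure lebesgue P = Q * (1 - (N - 1) / (N * Q)) ^ k"
      using r by (simp add: \<beta>_def)
  qed
qed


end
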